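(* Let $\mathfrak M$ be a Banach manifold (modelled on $X$) with chart family $\mathscr A$, and $\mathfrak M_0$ (modelled on $X_0$) a $C^1$-embedded Banach submanifold of $\mathfrak M$ with respect to $\mathscr A$. Assume $(\mathfrak M,\mathfrak M_0,\mathscr A)$ is inward spreadable with an inner $C^1$-kernel $\mathfrak M_1$. Then for every $\eta\in\mathfrak M_0$ and any three $(\mathfrak M_0,\mathfrak M_1)$-regular local charts $(\mathcal U,\varphi),(\mathcal V,\psi),(\mathcal W,\chi)$ of $\mathfrak M$ at $\eta$, $$(\varphi\circ\chi^{-1})'(\chi(\eta))=(\varphi\circ\psi^{-1})'(\psi(\eta))\,(\psi\circ\chi^{-1})'(\chi(\eta))\quad\text{in }L(X),$$ and in particular $(\varphi\circ\psi^{-1})'(\psi(\eta))=\big[(\psi\circ\varphi^{-1})'(\varphi(\eta))\big]^{-1}$.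
   Context: Densely embedded spaces and the class $\mathfrak C^k$. For Banach spaces $X$ and $X_0$, $X_0$ is a densely embedded Banach subspace of $X$ if $X_0$ is a dense linear subspace of $X$ and there is $C>0$ with $\|x\|_X\le C\|x\|_{X_0}$ for $x\in X_0$. For such $X_0\subseteq X$, a Banach space $Y$, an open set $U_0\subseteq X_0$ and an integer $k\ge1$, $\mathfrak C^k(U_0;X,Y)$ denotes the set of maps $F:U_0\to Y$ such that (i) for each $x_0\in U_0$ there are bounded symmetric $j$-linear maps $F^{(j)}(x_0):X^j\to Y$, $1\le j\le k$, with $\|F(x)-F(x_0)-\sum_{j=1}^k\frac1{j!}F^{(j)}(x_0)(x-x_0,\dots,x-x_0)\|_Y/\|x-x_0\|_{X_0}^k\to0$ as $\|x-x_0\|_{X_0}\to0$, and (ii) $x\mapsto F^{(j)}(x)$ is continuous from $U_0$ (with the $X_0$-topology) into the space $L^j(X,Y)$ of bounded $j$-linear maps. We write $F'=F^{(1)}$. Embedded submanifolds. Let $\mathfrak M,\mathfrak M_0$ be topological Banach manifolds modelled on $X$, $X_0$, let $\mathscr A$ be a family of local charts of $\mathfrak M$, and $k\ge1$. $\mathfrak M_0$ is a $C^k$-embedded Banach submanifold of $\mathfrak M$ with respect to $\mathscr A$ if: (D1) $X_0$ is a densely embedded Banach subspace of $X$; (D2) $\mathfrak M_0\subseteq\mathfrak M$ and $\mathcal U\cap\mathfrak M_0$ is open in $\mathfrak M_0$ for every open $\mathcal U\subseteq\mathfrak M$; (D3) the domains of the charts of $\mathscr A$ cover $\mathfrak M$;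 (D4) for $\eta\in\mathfrak M_0$ and $(\mathcal U,\varphi)\in\mathscr A$ with $\eta\in\mathcal U$, $(\mathcal U_0,\varphi|_{\mathcal U_0})$ with $\mathcal U_0:=\mathcal U\cap\mathfrak M_0$ is a local chart of $\mathfrak M_0$; (D5) for $\eta\in\mathfrak M_0$ and $(\mathcal U,\varphi),(\mathcal V,\psi)\in\mathscr A$ with $\eta\in\mathcal U\cap\mathcal V$, $\psi\circ\varphi^{-1}\in\mathfrak C^k(\varphi(\mathcal U_0\cap\mathcal V_0);X,X)$ and $\varphi\circ\psi^{-1}\in\mathfrak C^k(\psi(\mathcal U_0\cap\mathcal V_0);X,X)$. A chart of $\mathscr A$ whose domain contains $\eta$ is an $\mathfrak M_0$-regular local chart at $\eta$. $(\mathfrak M,\mathfrak M_0,\mathscr A)$ (with $\mathfrak M_0$ $C^1$-embedded) is inward spreadable if there is a Banach manifold $\mathfrak M_1\subseteq\mathfrak M_0$, modelled on a Banach space $X_1$, which is a $C^1$-embedded Banach submanifold of $\mathfrak M_0$ with respect to the restrictions to $\mathfrak M_0$ of the charts of $\mathscr A$ ($\mathfrak M_1$ is then an inner $C^1$-kernel and the charts of $\mathscr A$ are called $(\mathfrak M_0,\mathfrak M_1)$-regular). For charts at $\eta\in\mathfrak M_0$, $(\varphi\circ\psi^{-1})'(\psi(\eta))\in L(X)$ is the first derivative in the $\mathfrak C^1$ sense. *)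

theory Defs
  imports "HOL-Analysis.Analysis"
begin

text \<open>A densely embedded Banach
subspace X0 of X is represented by a type 'b together with the embedding
j :: 'b => 'a (bounded, linear, injective, dense range); X0 is identified with range j.\<close>

definition densely_embedded :: "('b::banach \<Rightarrow> 'a::banach) \<Rightarrow> bool" where
  "densely_embedded j \<longleftrightarrow> bounded_linear j \<and> inj j \<and> closure (range j) = UNIV"

definition is_chart :: "'m topology \<Rightarrow> 'm set \<Rightarrow> ('m \<Rightarrow> 'a::banach) \<Rightarrow> bool" where
  "is_chart M U \<phi> \<longleftrightarrow> openin M U \<and> open (\<phi> ` U) \<and>
     homeomorphic_map (subtopology M U) (top_of_set (\<phi> ` U)) \<phi>"

definition banach_manifold :: "'m topology \<Rightarrow> 'a::banach itself \<Rightarrow> bool" where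
  "banach_manifold M _ \<longleftrightarrow> (\<forall>x\<in>topspace M. \<exists>U (\<phi>::'m \<Rightarrow> 'a). is_chart M U \<phi> \<and> x \<in> U)"

definition C1_deriv_at ::
  "('b::banach \<Rightarrow> 'a::banach) \<Rightarrow> 'b set \<Rightarrow> ('b \<Rightarrow> 'c::banach) \<Rightarrow> 'b \<Rightarrow> ('a \<Rightarrow>\<^sub>L 'c) \<Rightarrow> bool" where
  "C1_deriv_at j U0 F x0 L \<longleftrightarrow>
     ((\<lambda>x. norm (F x - F x0 - blinfun_apply L (j x - j x0)) / norm (x - x0)) \<longlongrightarrow> 0)
       (at x0 within U0)"

definition frakC1 :: "('b::banach \<Rightarrow> 'a::banach) \<Rightarrow> 'b set \<Rightarrow> ('b \<Rightarrow> 'c::banach) \<Rightarrow> bool" where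
  "frakC1 j U0 F \<longleftrightarrow> open U0 \<and>
     (\<exists>F' :: 'b \<Rightarrow> ('a \<Rightarrow>\<^sub>L 'c). (\<forall>x0\<in>U0. C1_deriv_at j U0 F x0 (F' x0)) \<and> continuous_on U0 F')"

text \<open>The first derivative F'(x0) in L(X,Y) (unique since range j is dense).\<close>

definition C1_deriv ::
  "('b::banach \<Rightarrow> 'a::banach) \<Rightarrow> 'b set \<Rightarrow> ('b \<Rightarrow> 'c::banach) \<Rightarrow> 'b \<Rightarrow> ('a \<Rightarrow>\<^sub>L 'c)" where
  "C1_deriv j U0 F x0 = (THE L. C1_deriv_at j U0 F x0 L)"

text \<open>Transition map psi o phi^{-1} restricted to phi(U0 \<inter> V0), seen as a map on X0
(points of X0 are elements of 'b, identified with their image under j).\<close>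

definition trans_dom :: "('b \<Rightarrow> 'a) \<Rightarrow> 'm topology \<Rightarrow> 'm set \<Rightarrow> ('m \<Rightarrow> 'a) \<Rightarrow> 'm set \<Rightarrow> 'b set" where
  "trans_dom j M0 U \<phi> V = (\<lambda>m. inv j (\<phi> m)) ` (U \<inter> V \<inter> topspace M0)"

definition trans_map :: "('b \<Rightarrow> 'a) \<Rightarrow> 'm set \<Rightarrow> ('m \<Rightarrow> 'a) \<Rightarrow> ('m \<Rightarrow> 'a) \<Rightarrow> 'b \<Rightarrow> 'a" where
  "trans_map j U \<phi> \<psi> = (\<lambda>x. \<psi> (inv_into U \<phi> (j x)))"

definition C1_embedded ::
  "'m topology \<Rightarrow> 'm topology \<Rightarrow> ('b::banach \<Rightarrow> 'a::banach) \<Rightarrow> ('m set \<times> ('m \<Rightarrow> 'a)) set \<Rightarrow> bool" where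
  "C1_embedded M M0 j A \<longleftrightarrow>
     densely_embedded j \<and>
     topspace M0 \<subseteq> topspace M \<and> (\<forall>U. openin M U \<longrightarrow> openin M0 (U \<inter> topspace M0)) \<and>
     (\<forall>(U,\<phi>)\<in>A. is_chart M U \<phi>) \<and>
     topspace M \<subseteq> \<Union>(fst ` A) \<and>
     (\<forall>\<eta>\<in>topspace M0. \<forall>(U,\<phi>)\<in>A. \<eta> \<in> U \<longrightarrow>
        \<phi> ` (U \<inter> topspace M0) \<subseteq> range j \<and> is_chart M0 (U \<inter> topspace M0) (inv j \<circ> \<phi>)) \<and>
     (\<forall>\<eta>\<in>topspace M0. \<forall>(U,\<phi>)\<in>A. \<forall>(V,\<psi>)\<in>A. \<eta> \<in> U \<inter> V \<longrightarrow>
        frakC1 j (trans_dom j M0 U \<phi> V) (trans_map j U \<phi> \<psi>) \<and>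
        frakC1 j (trans_dom j M0 V \<psi> U) (trans_map j V \<psi> \<phi>))"

definition restrict_charts ::
  "('b \<Rightarrow> 'a) \<Rightarrow> 'm topology \<Rightarrow> ('m set \<times> ('m \<Rightarrow> 'a)) set \<Rightarrow> ('m set \<times> ('m \<Rightarrow> 'b)) set" where
  "restrict_charts j M0 A = (\<lambda>(U,\<phi>). (U \<inter> topspace M0, inv j \<circ> \<phi>)) ` A"

definition inner_C1_kernel ::
  "'m topology \<Rightarrow> ('b::banach \<Rightarrow> 'a::banach) \<Rightarrow> ('m set \<times> ('m \<Rightarrow> 'a)) set
   \<Rightarrow> 'm topology \<Rightarrow> ('d::banach \<Rightarrow> 'b) \<Rightarrow> bool" where
  "inner_C1_kernel M0 j A M1 j1 \<longleftrightarrow>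
     banach_manifold M1 TYPE('d) \<and> C1_embedded M0 M1 j1 (restrict_charts j M0 A)"

text \<open>(phi o psi^{-1})'(psi(eta)) in L(X).\<close>

definition trans_deriv ::
  "('b::banach \<Rightarrow> 'a::banach) \<Rightarrow> 'm topology \<Rightarrow> 'm set \<Rightarrow> ('m \<Rightarrow> 'a) \<Rightarrow> 'm set \<Rightarrow> ('m \<Rightarrow> 'a)
   \<Rightarrow> 'm \<Rightarrow> ('a \<Rightarrow>\<^sub>L 'a)" where
  "trans_deriv j M0 V \<psi> U \<phi> \<eta> =
     C1_deriv j (trans_dom j M0 V \<psi> U) (trans_map j V \<psi> \<phi>) (inv j (\<psi> \<eta>))"

end

theory Submission
  imports Defs
begin

lemma C1_deriv_at_iff:
  assumes bl: "bounded_linear j"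
  shows "C1_deriv_at j S F x0 L \<longleftrightarrow> (F has_derivative (\<lambda>h. L (j h))) (at x0 within S)"
proof -
  have blL: "bounded_linear (\<lambda>h. L (j h))"
    using bl by (simp add: bounded_linear_compose[OF blinfun.bounded_linear_right])
  have eq: "(\<lambda>x. norm (F x - F x0 - blinfun_apply L (j x - j x0)) / norm (x - x0)) =
        (\<lambda>y. norm ((1 / norm (y - x0)) *\<^sub>R (F y - (F x0 + L (j (y - x0))))))"
  proof
    fix y
    have "j y - j x0 = j (y - x0)" using bl by (simp add: linear_diff bounded_linear.linear)
    then show "norm (F y - F x0 - blinfun_apply L (j y - j x0)) / norm (y - x0) =
        norm ((1 / norm (y - x0)) *\<^sub>R (F y - (F x0 + L (j (y - x0)))))"
      by (simp only: norm_scaleR) (simp add: diff_diff_eq divide_inverse mult.commute)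
  qed
  show ?thesis
    unfolding C1_deriv_at_def has_derivative_within eq tendsto_norm_zero_iff
    using blL by simp
qed

lemma mvt_C1:
  fixes F :: "'b::banach \<Rightarrow> 'c::banach" and j :: "'b \<Rightarrow> 'a::banach" and D :: "'b \<Rightarrow> ('a \<Rightarrow>\<^sub>L 'c)"
  assumes bl: "bounded_linear j" and S: "open S" "y0 \<in> S"
    and der: "\<forall>y\<in>S. (F has_derivative (\<lambda>h. D y (j h))) (at y)"
    and cont: "continuous_on S D" and e: "e > 0"
  shows "\<exists>d>0. \<forall>y. norm (y - y0) < d \<longrightarrow> norm (F y - F y0 - D y0 (j y - j y0)) \<le> e * norm (j y - j y0)"
proof -
  obtain d1 where d1: "d1 > 0" "\<forall>y\<in>S. dist y y0 < d1 \<longrightarrow> dist (D y) (D y0) < e"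
    using cont S(2) e unfolding continuous_on_iff by blast
  obtain d2 where d2: "d2 > 0" "ball y0 d2 \<subseteq> S"
    using S open_contains_ball by blast
  define d where "d = min d1 d2"
  have "\<forall>y. norm (y - y0) < d \<longrightarrow> norm (F y - F y0 - D y0 (j y - j y0)) \<le> e * norm (j y - j y0)"
  proof (intro allI impI)
    fix y assume y: "norm (y - y0) < d"
    define v where "v = y - y0"
    define g where "g = (\<lambda>t::real. F (y0 + t *\<^sub>R v) - t *\<^sub>R D y0 (j v))"
    define g' where "g' = (\<lambda>t::real. \<lambda>h::real. h *\<^sub>R (D (y0 + t *\<^sub>R v) (j v) - D y0 (j v)))"
    have inball: "y0 + t *\<^sub>R v \<in> ball y0 d2 \<and> dist (y0 + t *\<^sub>R v) y0 < d1" if "t \<in> {0..1}" for t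
    proof -
      have "norm (t *\<^sub>R v) \<le> norm v" using that by (auto intro: mult_left_le_one_le)
      then show ?thesis using y unfolding d_def v_def by (auto simp: dist_norm)
    qed
    have "(g has_derivative g' t) (at t within {0..1})" if t: "t \<in> {0..1}" for t
    proof -
      have z: "y0 + t *\<^sub>R v \<in> S" using inball[OF t] d2 by auto
      have "((\<lambda>t. y0 + t *\<^sub>R v) has_derivative (\<lambda>h. h *\<^sub>R v)) (at t within {0..1})"
        by (auto intro!: derivative_eq_intros)
      from has_derivative_compose[OF this der[rule_format, OF z]]
      have "((\<lambda>t. F (y0 + t *\<^sub>R v)) has_derivative (\<lambda>h. D (y0 + t *\<^sub>R v) (j (h *\<^sub>R v)))) (at t within {0..1})" .
      then have "(g has_derivative (\<lambda>h. D (y0 + t *\<^sub>R v) (j (h *\<^sub>R v)) - h *\<^sub>R D y0 (j v))) (at t within {0..1})"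
        unfolding g_def by (auto intro!: derivative_eq_intros)
      moreover have "(\<lambda>h. D (y0 + t *\<^sub>R v) (j (h *\<^sub>R v)) - h *\<^sub>R D y0 (j v)) = g' t"
        using bl by (auto simp: g'_def linear_scale bounded_linear.linear blinfun.scaleR_right algebra_simps intro!: ext)
      ultimately show ?thesis by simp
    qed
    moreover have "onorm (g' t) \<le> e * norm (j v)" if t: "t \<in> {0..1}" for t
    proof (rule onorm_bound)
      show "0 \<le> e * norm (j v)" using e by simp
      fix h :: real
      have z: "y0 + t *\<^sub>R v \<in> S" "dist (y0 + t *\<^sub>R v) y0 < d1" using inball[OF t] d2 by auto
      have "norm (D (y0 + t *\<^sub>R v) (j v) - D y0 (j v)) = norm ((D (y0 + t *\<^sub>R v) - D y0) (j v))"
        by (simp add: blinfun.diff_left)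
      also have "\<dots> \<le> norm (D (y0 + t *\<^sub>R v) - D y0) * norm (j v)" by (rule norm_blinfun)
      also have "\<dots> \<le> e * norm (j v)"
        using d1(2) z by (intro mult_right_mono) (auto simp: dist_norm less_imp_le)
      finally have w: "norm (D (y0 + t *\<^sub>R v) (j v) - D y0 (j v)) \<le> e * norm (j v)" .
      show "norm (g' t h) \<le> e * norm (j v) * norm h"
        unfolding g'_def using w by (simp add: mult.commute mult_left_mono)
    qed
    ultimately have "norm (g 1 - g 0) \<le> e * norm (j v) * norm (1 - 0::real)"
      by (intro differentiable_bound[where S="{0..1}" and f'=g']) auto
    then show "norm (F y - F y0 - D y0 (j y - j y0)) \<le> e * norm (j y - j y0)"
      using bl by (simp add: g_def v_def linear_diff bounded_linear.linear algebra_simps)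
  qed
  then show ?thesis using d1 d2 unfolding d_def by (intro exI[of _ "min d1 d2"]) auto
qed

lemma deriv_unique:
  fixes j :: "'b::banach \<Rightarrow> 'a::banach" and L L' :: "'a \<Rightarrow>\<^sub>L 'c::banach"
  assumes dj: "densely_embedded j"
    and d1: "(F has_derivative (\<lambda>h. L (j h))) (at x0)"
    and d2: "(F has_derivative (\<lambda>h. L' (j h))) (at x0)"
  shows "L = L'"
proof -
  have e: "\<And>h. L (j h) = L' (j h)" using has_derivative_unique[OF d1 d2] by metis
  have "closed {a. L a = L' a}"
    by (intro closed_Collect_eq) (auto intro: continuous_intros)
  moreover have "range j \<subseteq> {a. L a = L' a}" using e by auto
  ultimately have "closure (range j) \<subseteq> {a. L a = L' a}" by (rule closure_minimal[rotated])
  then have "\<And>a. L a = L' a" using dj unfolding densely_embedded_def by auto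
  then show ?thesis by (rule blinfun_eqI)
qed

lemma chain_C1:
  fixes j :: "'b::banach \<Rightarrow> 'a::banach" and F1 :: "'b \<Rightarrow> 'a" and F2 F3 :: "'b \<Rightarrow> 'c::banach"
    and G :: "'b \<Rightarrow> 'b" and D2 :: "'b \<Rightarrow> ('a \<Rightarrow>\<^sub>L 'c)" and L1 :: "'a \<Rightarrow>\<^sub>L 'a"
  assumes bl: "bounded_linear j" and S2: "open S2" "G x0 \<in> S2"
    and der2: "\<forall>y\<in>S2. (F2 has_derivative (\<lambda>h. D2 y (j h))) (at y)"
    and cont2: "continuous_on S2 D2"
    and der1: "(F1 has_derivative (\<lambda>h. L1 (j h))) (at x0)"
    and S1: "open S1" "x0 \<in> S1" and contG: "continuous_on S1 G"
    and eqs: "\<forall>x\<in>S1. j (G x) = F1 x \<and> F3 x = F2 (G x)"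
  shows "(F3 has_derivative (\<lambda>h. D2 (G x0) (L1 (j h)))) (at x0)"
proof -
  define y0 where "y0 = G x0"
  have blD: "bounded_linear (\<lambda>h. D2 (G x0) (L1 (j h)))"
    using bl by (intro bounded_linear_compose[OF blinfun.bounded_linear_right]
        bounded_linear_compose[OF blinfun.bounded_linear_right])
  obtain Kj where Kj: "Kj > 0" "\<forall>x. norm (j x) \<le> norm x * Kj"
    using bounded_linear.pos_bounded[OF bl] by blast
  define C where "C = norm (D2 y0)"
  define B where "B = norm L1 * Kj"
  have C0: "C \<ge> 0" and B0: "B \<ge> 0" using Kj by (auto simp: C_def B_def)
  have "\<exists>d>0. \<forall>x\<in>UNIV. norm (x - x0) < d \<longrightarrow>
      norm (F3 x - F3 x0 - D2 (G x0) (L1 (j (x - x0)))) \<le> e * norm (x - x0)" if e: "e > 0" for e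
  proof -
    define e1 where "e1 = min 1 (e / (2 * (C + 1)))"
    define e2 where "e2 = e / (2 * (B + 1))"
    have e1: "e1 > 0" "e1 \<le> 1" "C * e1 \<le> e / 2"
    proof -
      show "e1 > 0" "e1 \<le> 1" using e C0 by (auto simp: e1_def)
      have "C * e1 \<le> C * (e / (2 * (C + 1)))" using C0 unfolding e1_def by (intro mult_left_mono) auto
      also have "\<dots> \<le> e / 2" using C0 e by (simp add: field_simps)
      finally show "C * e1 \<le> e / 2" .
    qed
    have e2: "e2 > 0" "e2 * (B + 1) = e / 2" using e B0 by (auto simp: e2_def field_simps)
    obtain d1 where d1: "d1 > 0" "\<forall>y\<in>UNIV. norm (y - x0) < d1 \<longrightarrow>
        norm (F1 y - F1 x0 - L1 (j (y - x0))) \<le> e1 * norm (y - x0)"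
      using der1 e1(1) unfolding has_derivative_within_alt by blast
    obtain dl where dl: "dl > 0" "\<forall>y. norm (y - y0) < dl \<longrightarrow>
        norm (F2 y - F2 y0 - D2 y0 (j y - j y0)) \<le> e2 * norm (j y - j y0)"
      using mvt_C1[OF bl S2(1) S2(2)[folded y0_def] der2 cont2 e2(1)] by blast
    obtain d3 where d3: "d3 > 0" "\<forall>x\<in>S1. dist x x0 < d3 \<longrightarrow> dist (G x) (G x0) < dl"
      using contG S1(2) dl(1) unfolding continuous_on_iff by blast
    obtain d4 where d4: "d4 > 0" "ball x0 d4 \<subseteq> S1"
      using S1 open_contains_ball by blast
    define d where "d = min (min d1 d3) d4"
    have "\<forall>x\<in>UNIV. norm (x - x0) < d \<longrightarrow>
      norm (F3 x - F3 x0 - D2 (G x0) (L1 (j (x - x0)))) \<le> e * norm (x - x0)"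
    proof (intro ballI impI)
      fix x assume x: "norm (x - x0) < d"
      define n where "n = norm (x - x0)"
      have xS: "x \<in> S1" using x d4 by (auto simp: d_def dist_norm norm_minus_commute)
      have Gx: "norm (G x - y0) < dl" using d3(2) xS x by (auto simp: d_def dist_norm y0_def)
      define \<Delta> where "\<Delta> = F1 x - F1 x0"
      define r1 where "r1 = F1 x - F1 x0 - L1 (j (x - x0))"
      have r1: "norm r1 \<le> e1 * n" using d1(2) x by (auto simp: r1_def n_def d_def)
      have jG: "j (G x) - j y0 = \<Delta>" using eqs xS S1(2) by (auto simp: \<Delta>_def y0_def)
      have "norm (L1 (j (x - x0))) \<le> norm L1 * norm (j (x - x0))" by (rule norm_blinfun)
      also have "\<dots> \<le> norm L1 * (n * Kj)" using Kj by (auto simp: n_def intro: mult_left_mono)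
      finally have Lb: "norm (L1 (j (x - x0))) \<le> B * n" by (simp add: B_def mult_ac)
      have "\<Delta> = L1 (j (x - x0)) + r1" by (simp add: r1_def \<Delta>_def)
      then have "norm \<Delta> \<le> B * n + e1 * n" using Lb r1 norm_triangle_ineq[of "L1 (j (x - x0))" r1] by simp
      also have "\<dots> \<le> (B + 1) * n" using e1(2) mult_right_mono[OF e1(2), of n] by (simp add: n_def distrib_right)
      finally have Db: "norm \<Delta> \<le> (B + 1) * n" .
      have R2: "norm (F2 (G x) - F2 y0 - D2 y0 \<Delta>) \<le> e2 * norm \<Delta>"
        using dl(2) Gx jG by force
      have "F3 x - F3 x0 - D2 (G x0) (L1 (j (x - x0))) = (F2 (G x) - F2 y0 - D2 y0 \<Delta>) + D2 y0 r1"
        using eqs xS S1(2) by (simp add: y0_def r1_def \<Delta>_def blinfun.diff_right blinfun.add_right algebra_simps)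
      then have "norm (F3 x - F3 x0 - D2 (G x0) (L1 (j (x - x0)))) \<le> norm (F2 (G x) - F2 y0 - D2 y0 \<Delta>) + norm (D2 y0 r1)"
        using norm_triangle_ineq by metis
      also have "\<dots> \<le> e2 * norm \<Delta> + C * norm r1"
        using R2 norm_blinfun[of "D2 y0" r1] by (simp add: C_def)
      also have "\<dots> \<le> e2 * ((B + 1) * n) + C * (e1 * n)"
        using Db r1 e2(1) C0 by (intro add_mono mult_left_mono) auto
      also have "\<dots> = (e2 * (B + 1)) * n + (C * e1) * n" by (simp add: algebra_simps)
      also have "\<dots> \<le> e / 2 * n + e / 2 * n"
        using e2(2) e1(3) by (intro add_mono mult_right_mono) (auto simp: n_def)
      also have "\<dots> = e * n" by simp
      finally show "norm (F3 x - F3 x0 - D2 (G x0) (L1 (j (x - x0)))) \<le> e * norm (x - x0)"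
        by (simp add: n_def)
    qed
    then show ?thesis using d1 d3 d4 by (intro exI[of _ d]) (auto simp: d_def)
  qed
  then show ?thesis using blD unfolding has_derivative_within_alt by blast
qed

lemma C1_deriv_eq:
  fixes j :: "'b::banach \<Rightarrow> 'a::banach"
  assumes dj: "densely_embedded j" and S: "open S" "x \<in> S" and d: "C1_deriv_at j S F x L"
  shows "C1_deriv j S F x = L"
proof -
  have bl: "bounded_linear j" using dj by (simp add: densely_embedded_def)
  have "\<And>L'. C1_deriv_at j S F x L' \<Longrightarrow> L' = L"
  proof -
    fix L' assume "C1_deriv_at j S F x L'"
    then have "(F has_derivative (\<lambda>h. L' (j h))) (at x)"
      using C1_deriv_at_iff[OF bl] at_within_open[OF S(2,1)] by metis
    moreover have "(F has_derivative (\<lambda>h. L (j h))) (at x)"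
      using d C1_deriv_at_iff[OF bl] at_within_open[OF S(2,1)] by metis
    ultimately show "L' = L" by (rule deriv_unique[OF dj])
  qed
  then show ?thesis unfolding C1_deriv_def using d by (rule the_equality[rotated])
qed

lemma chart_inj:
  assumes "is_chart M U \<phi>" shows "inj_on \<phi> U" "U \<subseteq> topspace M"
proof -
  show U: "U \<subseteq> topspace M" using assms openin_subset unfolding is_chart_def by blast
  have "inj_on \<phi> (topspace (subtopology M U))"
    using assms homeomorphic_imp_injective_map unfolding is_chart_def by blast
  then show "inj_on \<phi> U" using U by (simp add: Int_absorb1)
qed

lemma emb_facts:
  assumes E: "C1_embedded M M0 j A" and \<eta>: "\<eta> \<in> topspace M0"
    and UA: "(U, \<phi>) \<in> A" and iU: "\<eta> \<in> U"
  shows "inj_on \<phi> U" "\<phi> ` (U \<inter> topspace M0) \<subseteq> range j"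
    "is_chart M0 (U \<inter> topspace M0) (inv j \<circ> \<phi>)"
proof -
  have "\<forall>(U,\<phi>)\<in>A. is_chart M U \<phi>" using E unfolding C1_embedded_def by (elim conjE)
  from bspec[OF this UA] have "is_chart M U \<phi>" by simp
  then show "inj_on \<phi> U" by (rule chart_inj)
  have "\<forall>\<eta>\<in>topspace M0. \<forall>(U,\<phi>)\<in>A. \<eta> \<in> U \<longrightarrow>
        \<phi> ` (U \<inter> topspace M0) \<subseteq> range j \<and> is_chart M0 (U \<inter> topspace M0) (inv j \<circ> \<phi>)"
    using E unfolding C1_embedded_def by (elim conjE)
  from bspec[OF bspec[OF this \<eta>] UA] iU
  show "\<phi> ` (U \<inter> topspace M0) \<subseteq> range j" "is_chart M0 (U \<inter> topspace M0) (inv j \<circ> \<phi>)" by simp_all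
qed

lemma emb_C1:
  assumes E: "C1_embedded M M0 j A" and \<eta>: "\<eta> \<in> topspace M0"
    and UA: "(U, \<phi>) \<in> A" and VA: "(V, \<psi>) \<in> A" and "\<eta> \<in> U" "\<eta> \<in> V"
  shows "frakC1 j (trans_dom j M0 U \<phi> V) (trans_map j U \<phi> \<psi>)"
proof -
  have "\<forall>\<eta>\<in>topspace M0. \<forall>(U,\<phi>)\<in>A. \<forall>(V,\<psi>)\<in>A. \<eta> \<in> U \<inter> V \<longrightarrow>
        frakC1 j (trans_dom j M0 U \<phi> V) (trans_map j U \<phi> \<psi>) \<and>
        frakC1 j (trans_dom j M0 V \<psi> U) (trans_map j V \<psi> \<phi>)"
    using E unfolding C1_embedded_def by (elim conjE)
  from bspec[OF bspec[OF this \<eta>] UA] have "\<forall>(V,\<psi>)\<in>A. \<eta> \<in> U \<inter> V \<longrightarrow>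
        frakC1 j (trans_dom j M0 U \<phi> V) (trans_map j U \<phi> \<psi>) \<and>
        frakC1 j (trans_dom j M0 V \<psi> U) (trans_map j V \<psi> \<phi>)" by simp
  from bspec[OF this VA] assms(5,6) show ?thesis by simp
qed

lemma trans_id:
  fixes j :: "'b::banach \<Rightarrow> 'a::banach"
  assumes E: "C1_embedded M M0 j A" and \<eta>: "\<eta> \<in> topspace M0"
    and UA: "(U, \<phi>) \<in> A" and "\<eta> \<in> U"
  shows "trans_deriv j M0 U \<phi> U \<phi> \<eta> = id_blinfun"
proof -
  have dj: "densely_embedded j" using E by (simp add: C1_embedded_def)
  then have bl: "bounded_linear j" by (simp add: densely_embedded_def)
  note f = emb_facts[OF E \<eta> UA assms(4)]
  define S where "S = trans_dom j M0 U \<phi> U"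
  have oS: "open S" using emb_C1[OF E \<eta> UA UA assms(4) assms(4)] by (simp add: S_def frakC1_def)
  have x0: "inv j (\<phi> \<eta>) \<in> S" using \<eta> assms(4) by (auto simp: S_def trans_dom_def)
  have eq: "j x = trans_map j U \<phi> \<phi> x" if xS: "x \<in> S" for x
  proof -
    obtain m where m: "m \<in> U" "m \<in> topspace M0" "x = inv j (\<phi> m)"
      using xS unfolding S_def trans_dom_def by blast
    have jx: "j x = \<phi> m" using f(2) m by (auto simp: f_inv_into_f)
    show ?thesis using jx m f(1) by (simp add: trans_map_def)
  qed
  have "(trans_map j U \<phi> \<phi> has_derivative j) (at (inv j (\<phi> \<eta>)))"
    by (rule has_derivative_transform_within_open[OF bounded_linear_imp_has_derivative[OF bl] oS x0 eq])
  then have "C1_deriv_at j S (trans_map j U \<phi> \<phi>) (inv j (\<phi> \<eta>)) id_blinfun"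
    unfolding C1_deriv_at_iff[OF bl] by (simp add: has_derivative_at_withinI)
  then show ?thesis unfolding trans_deriv_def S_def[symmetric]
    by (rule C1_deriv_eq[OF dj oS x0])
qed


lemma trans_chain:
  fixes j :: "'b::banach \<Rightarrow> 'a::banach"
  assumes E: "C1_embedded M M0 j A" and \<eta>: "\<eta> \<in> topspace M0"
    and UA: "(U, \<phi>) \<in> A" and VA: "(V, \<psi>) \<in> A" and WA: "(W, \<zeta>) \<in> A"
    and iU: "\<eta> \<in> U" and iV: "\<eta> \<in> V" and iW: "\<eta> \<in> W"
  shows "trans_deriv j M0 W \<zeta> U \<phi> \<eta> = trans_deriv j M0 V \<psi> U \<phi> \<eta> o\<^sub>L trans_deriv j M0 W \<zeta> V \<psi> \<eta>"
proof -
  have dj: "densely_embedded j" using E by (simp add: C1_embedded_def)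
  then have bl: "bounded_linear j" by (simp add: densely_embedded_def)
  note fU = emb_facts[OF E \<eta> UA iU]
  note fV = emb_facts[OF E \<eta> VA iV]
  note fW = emb_facts[OF E \<eta> WA iW]
  define S1 where "S1 = trans_dom j M0 W \<zeta> V"
  define S2 where "S2 = trans_dom j M0 V \<psi> U"
  define S3 where "S3 = trans_dom j M0 W \<zeta> U"
  define F1 where "F1 = trans_map j W \<zeta> \<psi>"
  define F2 where "F2 = trans_map j V \<psi> \<phi>"
  define F3 where "F3 = trans_map j W \<zeta> \<phi>"
  define x0 where "x0 = inv j (\<zeta> \<eta>)"
  define y0 where "y0 = inv j (\<psi> \<eta>)"
  obtain D1 where D1: "open S1" "\<forall>x\<in>S1. C1_deriv_at j S1 F1 x (D1 x)"
    using emb_C1[OF E \<eta> WA VA iW iV] unfolding frakC1_def S1_def F1_def by blast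
  obtain D2 where D2: "open S2" "\<forall>x\<in>S2. C1_deriv_at j S2 F2 x (D2 x)" "continuous_on S2 D2"
    using emb_C1[OF E \<eta> VA UA iV iU] unfolding frakC1_def S2_def F2_def by blast
  have oS3: "open S3" using emb_C1[OF E \<eta> WA UA iW iU] unfolding frakC1_def S3_def by blast
  have x0: "x0 \<in> S1" "x0 \<in> S3" using \<eta> iU iV iW by (auto simp: x0_def S1_def S3_def trans_dom_def)
  have y0: "y0 \<in> S2" using \<eta> iU iV by (auto simp: y0_def S2_def trans_dom_def)
  define T where "T = (inv j \<circ> \<zeta>) ` (W \<inter> topspace M0)"
  have "homeomorphic_map (subtopology M0 (W \<inter> topspace M0)) (top_of_set T) (inv j \<circ> \<zeta>)"
    using fW(3) unfolding is_chart_def T_def by blast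
  then obtain g where g: "homeomorphic_maps (subtopology M0 (W \<inter> topspace M0)) (top_of_set T) (inv j \<circ> \<zeta>) g"
    unfolding homeomorphic_map_maps by blast
  have gcont: "continuous_map (top_of_set T) (subtopology M0 (W \<inter> topspace M0)) g"
    and ginv: "\<And>m. m \<in> W \<inter> topspace M0 \<Longrightarrow> g (inv j (\<zeta> m)) = m"
    using g unfolding homeomorphic_maps_def by auto
  have S1T: "S1 \<subseteq> T" by (auto simp: S1_def T_def trans_dom_def)
  have S1m: "\<exists>m. m \<in> W \<and> m \<in> V \<and> m \<in> topspace M0 \<and> x = inv j (\<zeta> m)" if "x \<in> S1" for x
    using that by (auto simp: S1_def trans_dom_def)
  define G where "G = (\<lambda>x. inv j (\<psi> (g x)))"
  have Gx0: "G x0 = y0" using ginv[of \<eta>] \<eta> iW by (simp add: G_def x0_def y0_def)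
  have eqs: "\<forall>x\<in>S1. j (G x) = F1 x \<and> F3 x = F2 (G x)"
  proof
    fix x assume "x \<in> S1"
    then obtain m where m: "m \<in> W" "m \<in> V" "m \<in> topspace M0" "x = inv j (\<zeta> m)" using S1m by blast
    have gx: "g x = m" using ginv m by simp
    have jx: "j x = \<zeta> m" using fW(2) m by (auto simp: f_inv_into_f)
    have "\<psi> m \<in> range j" using fV(2) m by auto
    then have jG: "j (G x) = \<psi> m" unfolding G_def gx by (simp add: f_inv_into_f)
    have "inv_into W \<zeta> (\<zeta> m) = m" using fW(1) m by simp
    moreover have "inv_into V \<psi> (\<psi> m) = m" using fV(1) m by simp
    ultimately show "j (G x) = F1 x \<and> F3 x = F2 (G x)"
      using jx jG by (simp add: F1_def F2_def F3_def trans_map_def)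
  qed
  have contG: "continuous_on S1 G"
  proof -
    have "continuous_map (top_of_set S1) (subtopology M0 (W \<inter> topspace M0)) g"
      using continuous_map_from_subtopology[OF gcont, of S1] S1T
      by (simp add: subtopology_subtopology Int_absorb1)
    then have c1: "continuous_map (top_of_set S1) M0 g"
      using continuous_map_in_subtopology by blast
    have "g ` S1 \<subseteq> V \<inter> topspace M0"
    proof
      fix y assume "y \<in> g ` S1"
      then obtain x where "x \<in> S1" "y = g x" by blast
      then obtain m where m: "m \<in> W" "m \<in> V" "m \<in> topspace M0" "x = inv j (\<zeta> m)" using S1m by blast
      then show "y \<in> V \<inter> topspace M0" using ginv \<open>y = g x\<close> by simp
    qed
    then have c2: "continuous_map (top_of_set S1) (subtopology M0 (V \<inter> topspace M0)) g"
      using c1 continuous_map_in_subtopology by fastforce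
    have "continuous_map (subtopology M0 (V \<inter> topspace M0)) (top_of_set ((inv j \<circ> \<psi>) ` (V \<inter> topspace M0))) (inv j \<circ> \<psi>)"
      using fV(3) homeomorphic_imp_continuous_map unfolding is_chart_def by blast
    then have c3: "continuous_map (subtopology M0 (V \<inter> topspace M0)) euclidean (inv j \<circ> \<psi>)"
      using continuous_map_in_subtopology by blast
    have "continuous_map (top_of_set S1) euclidean ((inv j \<circ> \<psi>) \<circ> g)"
      by (rule continuous_map_compose[OF c2 c3])
    then show ?thesis by (simp add: G_def o_def)
  qed
  have der2: "\<forall>y\<in>S2. (F2 has_derivative (\<lambda>h. D2 y (j h))) (at y)"
    using D2(2) C1_deriv_at_iff[OF bl] at_within_open[OF _ D2(1)] by metis
  have der1: "(F1 has_derivative (\<lambda>h. D1 x0 (j h))) (at x0)"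
    using D1(2) x0(1) C1_deriv_at_iff[OF bl] at_within_open[OF x0(1) D1(1)] by metis
  have "(F3 has_derivative (\<lambda>h. D2 (G x0) (D1 x0 (j h)))) (at x0)"
    by (rule chain_C1[OF bl D2(1) _ der2 D2(3) der1 D1(1) x0(1) contG eqs]) (use Gx0 y0 in simp)
  then have "C1_deriv_at j S3 F3 x0 (D2 y0 o\<^sub>L D1 x0)"
    unfolding C1_deriv_at_iff[OF bl] using Gx0 by (simp add: has_derivative_at_withinI)
  then have e3: "trans_deriv j M0 W \<zeta> U \<phi> \<eta> = D2 y0 o\<^sub>L D1 x0"
    unfolding trans_deriv_def S3_def[symmetric] F3_def[symmetric] x0_def[symmetric]
    by (rule C1_deriv_eq[OF dj oS3 x0(2)])
  have e1: "trans_deriv j M0 W \<zeta> V \<psi> \<eta> = D1 x0"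
    unfolding trans_deriv_def S1_def[symmetric] F1_def[symmetric] x0_def[symmetric]
    using C1_deriv_eq[OF dj D1(1) x0(1)] D1(2) x0(1) by blast
  have e2: "trans_deriv j M0 V \<psi> U \<phi> \<eta> = D2 y0"
    unfolding trans_deriv_def S2_def[symmetric] F2_def[symmetric] y0_def[symmetric]
    using C1_deriv_eq[OF dj D2(1) y0] D2(2) y0 by blast
  show ?thesis using e1 e2 e3 by simp
qed


theorem lemma2p3:
  fixes M M0 M1 :: "'m topology"
    and j :: "'b::banach \<Rightarrow> 'a::banach" and j1 :: "'d::banach \<Rightarrow> 'b"
    and A :: "('m set \<times> ('m \<Rightarrow> 'a)) set"
    and U V W :: "'m set" and \<phi> \<psi> \<zeta> :: "'m \<Rightarrow> 'a" and \<eta> :: 'm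
  assumes "banach_manifold M TYPE('a)" and "banach_manifold M0 TYPE('b)"
    and "C1_embedded M M0 j A"
    and "inner_C1_kernel M0 j A M1 j1"
    and "\<eta> \<in> topspace M0"
    and "(U, \<phi>) \<in> A" and "(V, \<psi>) \<in> A" and "(W, \<zeta>) \<in> A"
    and "\<eta> \<in> U" and "\<eta> \<in> V" and "\<eta> \<in> W"
  shows "trans_deriv j M0 W \<zeta> U \<phi> \<eta> =
           trans_deriv j M0 V \<psi> U \<phi> \<eta> o\<^sub>L trans_deriv j M0 W \<zeta> V \<psi> \<eta>
         \<and> trans_deriv j M0 V \<psi> U \<phi> \<eta> o\<^sub>L trans_deriv j M0 U \<phi> V \<psi> \<eta> = id_blinfun
         \<and> trans_deriv j M0 U \<phi> V \<psi> \<eta> o\<^sub>L trans_deriv j M0 V \<psi> U \<phi> \<eta> = id_blinfun"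
proof (intro conjI)
  show "trans_deriv j M0 W \<zeta> U \<phi> \<eta> =
           trans_deriv j M0 V \<psi> U \<phi> \<eta> o\<^sub>L trans_deriv j M0 W \<zeta> V \<psi> \<eta>"
    by (rule trans_chain[OF assms(3,5,6,7,8,9,10,11)])
  show "trans_deriv j M0 V \<psi> U \<phi> \<eta> o\<^sub>L trans_deriv j M0 U \<phi> V \<psi> \<eta> = id_blinfun"
    using trans_chain[OF assms(3,5,6,7,6,9,10,9)] trans_id[OF assms(3,5,6,9)] by simp
  show "trans_deriv j M0 U \<phi> V \<psi> \<eta> o\<^sub>L trans_deriv j M0 V \<psi> U \<phi> \<eta> = id_blinfun"
    using trans_chain[OF assms(3,5,7,6,7,10,9,10)] trans_id[OF assms(3,5,7,10)] by simp
qed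

end
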